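(* Let $w>0$ be a smooth $1$-periodic function with $\int_0^1 w(x)\,dx=1$, and let $Q(y)=y\ln y-y+1$. Then $$\int_0^1 Q(w)\,dx\le \Bigl(\int_0^1 \frac{w_x^2}{w}\,dx\Bigr)^{1/2}.$$ *)

theory Defs
  imports "HOL-Analysis.Analysis"
begin

definition smooth_real :: "(real \<Rightarrow> real) \<Rightarrow> bool" where
  "smooth_real f \<longleftrightarrow> (\<exists>D :: nat \<Rightarrow> real \<Rightarrow> real. D 0 = f \<and>
      (\<forall>k x. (D k has_real_derivative D (Suc k) x) (at x)))"

definition Qfun :: "real \<Rightarrow> real" where
  "Qfun y = y * ln y - y + 1"

end

theory Submission
  imports Defs
begin

lemma amgm_bound:
  fixes A J :: real
  assumes J: "J \<ge> 0" and H: "\<And>t. t > 0 \<Longrightarrow> A \<le> (t * J + 1 / t) / 2"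
  shows "A \<le> sqrt J"
proof (cases "J = 0")
  case True
  have "A \<le> e" if "e > 0" for e
  proof -
    have "A \<le> (1/(2*e) * J + 1 / (1/(2*e))) / 2" using H[of "1/(2*e)"] that by simp
    then show ?thesis using True by simp
  qed
  then have "A \<le> 0" by (meson dense not_le)
  then show ?thesis using True by simp
next
  case False
  then have Jp: "J > 0" using J by simp
  have "A \<le> (1 / sqrt J * J + 1 / (1 / sqrt J)) / 2" using H[of "1 / sqrt J"] Jp by simp
  also have "1 / sqrt J * J = sqrt J" using Jp
    by (simp add: real_div_sqrt)
  also have "1 / (1 / sqrt J) = sqrt J" by simp
  finally show ?thesis by (simp add: field_simps)
qed

lemma ftc_bound:
  fixes h h' :: "real \<Rightarrow> real"
  assumes der: "\<And>x. (h has_real_derivative h' x) (at x)"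
    and cont: "continuous_on UNIV h'"
    and ab: "a \<le> b" "0 \<le> a" "b \<le> 1"
  shows "\<bar>h b - h a\<bar> \<le> integral {0..1} (\<lambda>x. \<bar>h' x\<bar>)"
proof -
  have "(h' has_integral (h b - h a)) {a..b}"
    apply (rule fundamental_theorem_of_calculus[OF ab(1)])
    using der by (auto simp: has_real_derivative_iff_has_vector_derivative[symmetric]
        intro: has_field_derivative_at_within)
  then have eq: "h b - h a = integral {a..b} h'" by (simp add: integral_unique)
  have ci: "continuous_on S h'" for S using cont continuous_on_subset by blast
  have cia: "continuous_on S (\<lambda>x. \<bar>h' x\<bar>)" for S
    using continuous_on_rabs[OF ci] .
  have "norm (integral {a..b} h') \<le> integral {a..b} (\<lambda>x. \<bar>h' x\<bar>)"
    by (rule integral_norm_bound_integral) (auto intro!: integrable_continuous_real ci cia)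
  then have "\<bar>integral {a..b} h'\<bar> \<le> integral {a..b} (\<lambda>x. \<bar>h' x\<bar>)" by simp
  also have "\<dots> \<le> integral {0..1} (\<lambda>x. \<bar>h' x\<bar>)"
    by (rule integral_subset_le) (use ab in \<open>auto intro!: integrable_continuous_real cia\<close>)
  finally show ?thesis using eq by simp
qed

theorem lemma3p2:
  fixes w :: "real \<Rightarrow> real"
  assumes smooth: "smooth_real w"
    and periodic: "\<And>x. w (x + 1) = w x"
    and pos: "\<And>x. w x > 0"
    and mass: "integral {0..1} w = 1"
  shows "integral {0..1} (\<lambda>x. Qfun (w x))
           \<le> sqrt (integral {0..1} (\<lambda>x. (deriv w x)\<^sup>2 / w x))"
proof -
  obtain D where D0: "D 0 = w" and DD: "\<And>k x. (D k has_real_derivative D (Suc k) x) (at x)"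
    using smooth unfolding smooth_real_def by blast
  define w' where "w' = D 1"
  have wd: "(w has_real_derivative w' x) (at x)" for x using DD[of 0 x] D0 w'_def by simp
  have dw: "deriv w x = w' x" for x using wd DERIV_imp_deriv by blast
  have cw': "continuous_on UNIV w'"
    unfolding w'_def using DD[of 1] by (metis DERIV_isCont continuous_at_imp_continuous_on)
  have cw: "continuous_on UNIV w"
    using wd by (metis DERIV_isCont continuous_at_imp_continuous_on)
  have cwS: "continuous_on S w" for S using cw continuous_on_subset by blast
  have cw'S: "continuous_on S w'" for S using cw' continuous_on_subset by blast
  have wne: "w x \<noteq> 0" for x using pos[of x] by simp
  define h where "h x = sqrt (w x)" for x
  define h' where "h' x = w' x / (2 * sqrt (w x))" for x
  have hd: "(h has_real_derivative h' x) (at x)" for x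
    unfolding h_def h'_def
    using DERIV_chain2[OF DERIV_real_sqrt[OF pos[of x]] wd[of x]] by (simp add: field_simps)
  have ch': "continuous_on UNIV h'"
    unfolding h'_def using wne
    by (intro continuous_intros cw' cw) auto
  have ch'S: "continuous_on S h'" for S using ch' continuous_on_subset by blast
  obtain y0 where y0: "y0 \<in> {0..1}" and y0min: "\<And>y. y \<in> {0..1} \<Longrightarrow> w y0 \<le> w y"
    using continuous_attains_inf[OF compact_Icc _ cwS[of "{0..1}"]] by auto
  have i1: "(\<lambda>x. w y0) integrable_on {0..1::real}"
    by (rule integrable_continuous_real[OF continuous_on_const])
  have i2: "w integrable_on {0..1}" by (rule integrable_continuous_real[OF cwS])
  have "w y0 \<le> integral {0..1} w" using integral_le[OF i1 i2] y0min by simp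
  then have wy0: "w y0 \<le> 1" using mass by simp
  then have hy0: "h y0 \<le> 1" unfolding h_def by simp
  define J where "J = integral {0..1} (\<lambda>x. (h' x)\<^sup>2)"
  have h'sq: "(h' x)\<^sup>2 = (1/4) * ((deriv w x)\<^sup>2 / w x)" for x
    unfolding h'_def dw using pos[of x] by (simp add: power_divide power_mult_distrib)
  have eqJ: "integral {0..1} (\<lambda>x. (deriv w x)\<^sup>2 / w x) = 4 * J"
    unfolding J_def h'sq integral_mult_right by simp
  have J0: "J \<ge> 0" unfolding J_def
    by (rule integral_nonneg) (auto intro!: integrable_continuous_real continuous_intros ch'S)
  define A where "A = integral {0..1} (\<lambda>x. \<bar>h' x\<bar>)"
  have "A \<le> (t * J + 1 / t) / 2" if t: "t > 0" for t
  proof -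
    have pt: "\<bar>h' x\<bar> \<le> (t * (h' x)\<^sup>2 + 1 / t) / 2" for x
    proof -
      have "0 \<le> (t * \<bar>h' x\<bar> - 1)\<^sup>2 / t" using t by simp
      also have "(t * \<bar>h' x\<bar> - 1)\<^sup>2 / t = t * (h' x)\<^sup>2 + 1 / t - 2 * \<bar>h' x\<bar>"
        using t by (simp add: field_simps power2_eq_square)
      finally show ?thesis by simp
    qed
    have j1: "(\<lambda>x. \<bar>h' x\<bar>) integrable_on {0..1::real}"
      by (intro integrable_continuous_real continuous_intros ch'S)
    have j2: "(\<lambda>x. (t * (h' x)\<^sup>2 + 1 / t) / 2) integrable_on {0..1::real}"
      by (intro integrable_continuous_real continuous_intros ch'S) auto
    have "A \<le> integral {0..1} (\<lambda>x. (t * (h' x)\<^sup>2 + 1 / t) / 2)"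
      unfolding A_def using integral_le[OF j1 j2] pt by blast
    also have "\<dots> = (t * J + 1 / t) / 2"
    proof -
      have e: "(\<lambda>x. (t * (h' x)\<^sup>2 + 1 / t) / 2) = (\<lambda>x. (t / 2) * (h' x)\<^sup>2 + 1 / (2 * t))"
        by (auto simp: field_simps)
      have l1: "(\<lambda>x. (t / 2) * (h' x)\<^sup>2) integrable_on {0..1::real}"
        by (intro integrable_continuous_real continuous_intros ch'S) auto
      have l2: "(\<lambda>x. 1 / (2 * t)) integrable_on {0..1::real}"
        by (rule integrable_continuous_real[OF continuous_on_const])
      show ?thesis unfolding e integral_add[OF l1 l2] integral_mult_right J_def
        by (simp add: field_simps)
    qed
    finally show ?thesis .
  qed
  then have AJ: "A \<le> sqrt J" using amgm_bound J0 by blast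
  have bound: "ln (w x) \<le> sqrt (4 * J)" if x: "x \<in> {0..1}" for x
  proof -
    have "\<bar>h x - h y0\<bar> \<le> A"
    proof (cases "y0 \<le> x")
      case True
      then show ?thesis unfolding A_def using ftc_bound[OF hd ch' True] x y0 by auto
    next
      case False
      then show ?thesis unfolding A_def using ftc_bound[OF hd ch', of x y0] x y0 by auto
    qed
    then have "h x - 1 \<le> sqrt J" using hy0 AJ by linarith
    moreover have "ln (h x) \<le> h x - 1" unfolding h_def using pos[of x] by (intro ln_le_minus_one) simp
    moreover have "ln (w x) = 2 * ln (h x)" unfolding h_def using pos[of x] by (simp add: ln_sqrt)
    moreover have "sqrt (4 * J) = 2 * sqrt J" by (simp add: real_sqrt_mult)
    ultimately show ?thesis by linarith
  qed
  define S where "S = sqrt (4 * J)"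
  have cQ: "continuous_on {0..1} (\<lambda>x. Qfun (w x))"
    unfolding Qfun_def using wne by (intro continuous_intros cwS) auto
  have k1: "(\<lambda>x. Qfun (w x)) integrable_on {0..1}" using cQ integrable_continuous_real by blast
  have k2: "(\<lambda>x. S * w x + (1 - w x)) integrable_on {0..1}"
      by (intro integrable_continuous_real continuous_intros cwS)
  have "Qfun (w x) \<le> S * w x + (1 - w x)" if x: "x \<in> {0..1}" for x
  proof -
    have "w x * ln (w x) \<le> w x * S" using bound[OF x] pos[of x] unfolding S_def
      by (simp add: mult_left_mono)
    then show "Qfun (w x) \<le> S * w x + (1 - w x)" unfolding Qfun_def by (simp add: mult.commute)
  qed
  then have "integral {0..1} (\<lambda>x. Qfun (w x)) \<le> integral {0..1} (\<lambda>x. S * w x + (1 - w x))"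
    using integral_le[OF k1 k2] by blast
  also have "\<dots> = S"
  proof -
    have m1: "(\<lambda>x. S * w x) integrable_on {0..1::real}"
      by (intro integrable_continuous_real continuous_intros cwS)
    have m2: "(\<lambda>x. 1 - w x) integrable_on {0..1::real}"
      by (intro integrable_continuous_real continuous_intros cwS)
    have m3: "(\<lambda>x. 1::real) integrable_on {0..1::real}"
      by (rule integrable_continuous_real[OF continuous_on_const])
    have "integral {0..1} (\<lambda>x. 1 - w x) = 0"
      using integral_diff[OF m3 i2] mass by simp
    then show ?thesis using integral_add[OF m1 m2] mass by simp
  qed
  finally show ?thesis unfolding S_def eqJ .
qed
end
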